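(* Let $k$ be a difference field of characteristic $0$ and $R=k\{y_1,\ldots,y_n\}$. If $I$ is a monomial $\sigma$-ideal of $R$, then its radical well-mixed closure $\langle I\rangle_r$ is also a monomial $\sigma$-ideal.
   Context: A difference field is a field $k$ with a ring endomorphism $\sigma$; $R=k\{y_1,\ldots,y_n\}$ is the polynomial ring over $k$ in the variables $\sigma^j(y_i)$, with $\sigma$ extended naturally. For $p=\sum_ic_ix^i\in\mathbb{N}[x]$ and $a\in R$, $a^p=\prod_i(\sigma^i(a))^{c_i}$; monomials are $\mathbf{y}^{\mathbf{u}}=y_1^{u_1}\cdots y_n^{u_n}$ with $\mathbf{u}\in\mathbb{N}[x]^n$. A $\sigma$-ideal is an ideal stable under $\sigma$; monomial if generated by monomials; well-mixed if $ab\in I\Rightarrow a\sigma(b)\in I$. $\langle I\rangle_r$ is the smallest radical well-mixed $\sigma$-ideal containing $I$. *)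

theory Defs
  imports "HOL-Library.Poly_Mapping"
begin

text \<open>Difference polynomial ring k{y_1..y_n}: the variable (i, j) stands for
  sigma^j(y_i), with i ranging over a finite index type 'n.\<close>

type_synonym 'n dmon = "('n \<times> nat) \<Rightarrow>\<^sub>0 nat"
type_synonym ('n, 'k) dpoly = "'n dmon \<Rightarrow>\<^sub>0 'k"

definition difference_field :: "('k::field \<Rightarrow> 'k) \<Rightarrow> bool" where
  "difference_field \<sigma> \<longleftrightarrow> (\<forall>a b. \<sigma> (a + b) = \<sigma> a + \<sigma> b) \<and>
      (\<forall>a b. \<sigma> (a * b) = \<sigma> a * \<sigma> b) \<and> \<sigma> 1 = 1"

definition shift_mon :: "'n dmon \<Rightarrow> 'n dmon" where
  "shift_mon m = (\<Sum>v\<in>Poly_Mapping.keys m. Poly_Mapping.single (fst v, Suc (snd v)) (Poly_Mapping.lookup m v))"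

definition sigmaR :: "('k::field \<Rightarrow> 'k) \<Rightarrow> ('n, 'k) dpoly \<Rightarrow> ('n, 'k) dpoly" where
  "sigmaR \<sigma> p = (\<Sum>m\<in>Poly_Mapping.keys p. Poly_Mapping.single (shift_mon m) (\<sigma> (Poly_Mapping.lookup p m)))"

definition dmonomial :: "'n dmon \<Rightarrow> ('n, 'k::field) dpoly" where
  "dmonomial u = Poly_Mapping.single u 1"

definition is_ideal :: "('a::comm_ring_1) set \<Rightarrow> bool" where
  "is_ideal I \<longleftrightarrow> 0 \<in> I \<and> (\<forall>a\<in>I. \<forall>b\<in>I. a + b \<in> I) \<and> (\<forall>r a. a \<in> I \<longrightarrow> r * a \<in> I)"

definition ideal_gen :: "('a::comm_ring_1) set \<Rightarrow> 'a set" where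
  "ideal_gen S = \<Inter>{J. is_ideal J \<and> S \<subseteq> J}"

definition sigma_ideal :: "('k::field \<Rightarrow> 'k) \<Rightarrow> ('n, 'k) dpoly set \<Rightarrow> bool" where
  "sigma_ideal \<sigma> I \<longleftrightarrow> is_ideal I \<and> (\<forall>a\<in>I. sigmaR \<sigma> a \<in> I)"

definition monomial_ideal :: "('n, 'k::field) dpoly set \<Rightarrow> bool" where
  "monomial_ideal I \<longleftrightarrow> (\<exists>S. S \<subseteq> range dmonomial \<and> I = ideal_gen S)"

definition well_mixed :: "('k::field \<Rightarrow> 'k) \<Rightarrow> ('n, 'k) dpoly set \<Rightarrow> bool" where
  "well_mixed \<sigma> I \<longleftrightarrow> (\<forall>a b. a * b \<in> I \<longrightarrow> a * sigmaR \<sigma> b \<in> I)"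

definition radical_set :: "('a::comm_ring_1) set \<Rightarrow> bool" where
  "radical_set I \<longleftrightarrow> (\<forall>a k. 0 < k \<longrightarrow> a ^ k \<in> I \<longrightarrow> a \<in> I)"

definition rwm_closure :: "('k::field \<Rightarrow> 'k) \<Rightarrow> ('n, 'k) dpoly set \<Rightarrow> ('n, 'k) dpoly set" where
  "rwm_closure \<sigma> I = \<Inter>{J. sigma_ideal \<sigma> J \<and> well_mixed \<sigma> J \<and> radical_set J \<and> I \<subseteq> J}"

end

theory Submission
  imports Defs "HOL-Library.Countable"
begin


definition rkE :: "(('n::finite \<times> nat) \<Rightarrow>\<^sub>0 nat) \<Rightarrow> (nat \<Rightarrow>\<^sub>0 nat)" where
  "rkE m = Abs_poly_mapping (\<lambda>n. if n \<in> (to_nat :: ('n \<times> nat) \<Rightarrow> nat) ` UNIV then Poly_Mapping.lookup m (from_nat n) else 0)"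

lemma lookup_E: fixes m :: "('n::finite \<times> nat) \<Rightarrow>\<^sub>0 nat" shows "Poly_Mapping.lookup (rkE m) n = (if n \<in> (to_nat :: ('n::finite \<times> nat) \<Rightarrow> nat) ` UNIV then Poly_Mapping.lookup m (from_nat n) else 0)"
proof -
  have fin: "finite {n. (if n \<in> (to_nat :: ('n::finite \<times> nat) \<Rightarrow> nat) ` UNIV then Poly_Mapping.lookup m (from_nat n) else 0) \<noteq> 0}"
    by (rule finite_subset[of _ "to_nat ` Poly_Mapping.keys m"]) (auto simp: in_keys_iff)
  show ?thesis unfolding rkE_def lookup_Abs_poly_mapping[OF fin] ..
qed

lemma E_add: "rkE (a + b) = rkE a + rkE b"
  by (rule poly_mapping_eqI) (simp add: lookup_E lookup_add)

lemma E_inj: fixes a b :: "('n::finite \<times> nat) \<Rightarrow>\<^sub>0 nat" assumes "rkE a = rkE b" shows "a = b"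
proof (rule poly_mapping_eqI)
  fix v :: "'n \<times> nat"
  have "Poly_Mapping.lookup (rkE a) (to_nat v) = Poly_Mapping.lookup (rkE b) (to_nat v)" using assms by simp
  then show "Poly_Mapping.lookup a v = Poly_Mapping.lookup b v" by (simp add: lookup_E)
qed

lemma lookup_mult_fin:
  fixes f g :: "('a::monoid_add \<Rightarrow>\<^sub>0 'b::semiring_0)"
  shows "Poly_Mapping.lookup (f * g) k = (\<Sum>l\<in>Poly_Mapping.keys f. Poly_Mapping.lookup f l *
     (\<Sum>q\<in>Poly_Mapping.keys g. (Poly_Mapping.lookup g q when k = l + q)))"
proof -
  have inner: "(\<Sum>q. (Poly_Mapping.lookup g q when k = l + q)) = (\<Sum>q\<in>Poly_Mapping.keys g. (Poly_Mapping.lookup g q when k = l + q))" for l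
    by (rule Sum_any.expand_superset) (auto simp: in_keys_iff)
  have "Poly_Mapping.lookup (f * g) k = (\<Sum>l. Poly_Mapping.lookup f l * (\<Sum>q\<in>Poly_Mapping.keys g. (Poly_Mapping.lookup g q when k = l + q)))"
    by (simp add: lookup_mult inner)
  also have "\<dots> = (\<Sum>l\<in>Poly_Mapping.keys f. Poly_Mapping.lookup f l *
     (\<Sum>q\<in>Poly_Mapping.keys g. (Poly_Mapping.lookup g q when k = l + q)))"
    by (rule Sum_any.expand_superset) (auto simp: in_keys_iff)
  finally show ?thesis .
qed

lemma dpoly_no_zd:
  fixes f g :: "('n::finite, 'k::field) dpoly"
  assumes "f \<noteq> 0" "g \<noteq> 0" shows "f * g \<noteq> 0"
proof -
  let ?F = "Poly_Mapping.keys f" and ?G = "Poly_Mapping.keys g"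
  have F: "finite ?F" "?F \<noteq> {}" and G: "finite ?G" "?G \<noteq> {}" using assms by auto
  have "Max (rkE ` ?F) \<in> rkE ` ?F" using F by simp
  then obtain a0 where a0: "a0 \<in> ?F" "rkE a0 = Max (rkE ` ?F)" by auto
  have "Max (rkE ` ?G) \<in> rkE ` ?G" using G by simp
  then obtain b0 where b0: "b0 \<in> ?G" "rkE b0 = Max (rkE ` ?G)" by auto
  have aF: "rkE a \<le> rkE a0" if "a \<in> ?F" for a using a0 F that by simp
  have bG: "rkE b \<le> rkE b0" if "b \<in> ?G" for b using b0 G that by simp
  have uniq: "a = a0 \<and> b = b0" if "a \<in> ?F" "b \<in> ?G" "a0 + b0 = a + b" for a b
  proof -
    have e: "rkE a + rkE b = rkE a0 + rkE b0" using that(3) by (metis E_add)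
    have "rkE a = rkE a0"
    proof (rule ccontr)
      assume "rkE a \<noteq> rkE a0"
      then have "rkE a < rkE a0" using aF[OF that(1)] by simp
      then have "rkE a + rkE b < rkE a0 + rkE b0" using bG[OF that(2)] by (rule add_less_le_mono)
      then show False using e by simp
    qed
    then have "a = a0" by (rule E_inj)
    then show ?thesis using that(3) by simp
  qed
  let ?k = "a0 + b0"
  have "Poly_Mapping.lookup (f * g) ?k = (\<Sum>l\<in>?F. Poly_Mapping.lookup f l *
     (\<Sum>q\<in>?G. (Poly_Mapping.lookup g q when ?k = l + q)))" by (rule lookup_mult_fin)
  also have "\<dots> = Poly_Mapping.lookup f a0 * (\<Sum>q\<in>?G. (Poly_Mapping.lookup g q when ?k = a0 + q))"
  proof -
    have "(\<Sum>l\<in>?F - {a0}. Poly_Mapping.lookup f l *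
     (\<Sum>q\<in>?G. (Poly_Mapping.lookup g q when ?k = l + q))) = 0"
    proof (rule sum.neutral, intro ballI)
      fix l assume l: "l \<in> ?F - {a0}"
      have "(\<Sum>q\<in>?G. (Poly_Mapping.lookup g q when ?k = l + q)) = 0"
        by (rule sum.neutral) (use l uniq in \<open>auto simp: when_def\<close>)
      then show "Poly_Mapping.lookup f l * (\<Sum>q\<in>?G. (Poly_Mapping.lookup g q when ?k = l + q)) = 0" by simp
    qed
    then show ?thesis by (simp add: sum.remove[OF F(1) a0(1)])
  qed
  also have "(\<Sum>q\<in>?G. (Poly_Mapping.lookup g q when ?k = a0 + q)) = Poly_Mapping.lookup g b0"
  proof -
    have "(\<Sum>q\<in>?G - {b0}. (Poly_Mapping.lookup g q when ?k = a0 + q)) = 0"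
      by (rule sum.neutral) (use uniq a0 in \<open>auto simp: when_def\<close>)
    then show ?thesis by (simp add: sum.remove[OF G(1) b0(1)])
  qed
  finally have "Poly_Mapping.lookup (f * g) ?k = Poly_Mapping.lookup f a0 * Poly_Mapping.lookup g b0" .
  moreover have "Poly_Mapping.lookup f a0 \<noteq> 0" "Poly_Mapping.lookup g b0 \<noteq> 0" using a0 b0 by (auto simp: in_keys_iff)
  ultimately show ?thesis by auto
qed


lemma dpoly_pow_zero:
  fixes x :: "('n::finite, 'k::field) dpoly"
  assumes "x ^ k = 0" shows "x = 0"
  using assms
proof (induction k)
  case 0 then show ?case by simp
next
  case (Suc k)
  then show ?case using dpoly_no_zd[of x "x ^ k"] by auto
qed

lemma closure_props:
  "sigma_ideal \<sigma> (rwm_closure \<sigma> I) \<and> well_mixed \<sigma> (rwm_closure \<sigma> I) \<and>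
   radical_set (rwm_closure \<sigma> I) \<and> I \<subseteq> rwm_closure \<sigma> I"
proof -
  define F where "F = {J. sigma_ideal \<sigma> J \<and> well_mixed \<sigma> J \<and> radical_set J \<and> I \<subseteq> J}"
  have C: "rwm_closure \<sigma> I = \<Inter>F" by (simp add: rwm_closure_def F_def)
  have memF: "sigma_ideal \<sigma> J" "well_mixed \<sigma> J" "radical_set J" "I \<subseteq> J" if "J \<in> F" for J
    using that by (simp_all add: F_def)
  have h0: "0 \<in> \<Inter>F"
  proof (rule InterI)
    fix J assume "J \<in> F" then show "0 \<in> J" using memF(1) by (simp add: sigma_ideal_def is_ideal_def)
  qed
  have hadd: "a + b \<in> \<Inter>F" if "a \<in> \<Inter>F" "b \<in> \<Inter>F" for a b
  proof (rule InterI)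
    fix J assume J: "J \<in> F"
    then have "a \<in> J" "b \<in> J" using that by auto
    then show "a + b \<in> J" using memF(1)[OF J] unfolding sigma_ideal_def is_ideal_def by blast
  qed
  have hmul: "r * a \<in> \<Inter>F" if "a \<in> \<Inter>F" for r a
  proof (rule InterI)
    fix J assume J: "J \<in> F"
    then have "a \<in> J" using that by auto
    then show "r * a \<in> J" using memF(1)[OF J] unfolding sigma_ideal_def is_ideal_def by blast
  qed
  have hsig: "sigmaR \<sigma> a \<in> \<Inter>F" if "a \<in> \<Inter>F" for a
  proof (rule InterI)
    fix J assume J: "J \<in> F"
    then have "a \<in> J" using that by auto
    then show "sigmaR \<sigma> a \<in> J" using memF(1)[OF J] unfolding sigma_ideal_def by blast
  qed
  have hwm: "a * sigmaR \<sigma> b \<in> \<Inter>F" if "a * b \<in> \<Inter>F" for a b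
  proof (rule InterI)
    fix J assume J: "J \<in> F"
    then have "a * b \<in> J" using that by auto
    then show "a * sigmaR \<sigma> b \<in> J" using memF(2)[OF J] unfolding well_mixed_def by blast
  qed
  have hrad: "a \<in> \<Inter>F" if "0 < k" "a ^ k \<in> \<Inter>F" for a k
  proof (rule InterI)
    fix J assume J: "J \<in> F"
    then have "a ^ k \<in> J" using that by auto
    then show "a \<in> J" using memF(3)[OF J] that(1) unfolding radical_set_def by blast
  qed
  have hI: "I \<subseteq> \<Inter>F" using memF(4) by blast
  have id: "is_ideal (\<Inter>F)" unfolding is_ideal_def using h0 hadd hmul by blast
  have sig: "sigma_ideal \<sigma> (\<Inter>F)" unfolding sigma_ideal_def using id hsig by blast
  have wm: "well_mixed \<sigma> (\<Inter>F)" unfolding well_mixed_def using hwm by blast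
  have rad: "radical_set (\<Inter>F)" unfolding radical_set_def using hrad by blast
  show ?thesis unfolding C using sig wm rad hI by blast
qed

lemma closure_least:
  "sigma_ideal \<sigma> J \<Longrightarrow> well_mixed \<sigma> J \<Longrightarrow> radical_set J \<Longrightarrow> I \<subseteq> J \<Longrightarrow> rwm_closure \<sigma> I \<subseteq> J"
  unfolding rwm_closure_def by blast

lemma keys_add_nat: "Poly_Mapping.keys (m + m' :: 'a \<Rightarrow>\<^sub>0 nat) = Poly_Mapping.keys m \<union> Poly_Mapping.keys m'"
  by (auto simp: in_keys_iff lookup_add)

lemma dmonomial_mult: "dmonomial a * dmonomial b = (dmonomial (a + b) :: ('n, 'k::field) dpoly)"
  by (simp add: dmonomial_def mult_single)

lemma sigmaR_dmonomial:
  assumes "difference_field \<sigma>"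
  shows "sigmaR \<sigma> (dmonomial m) = dmonomial (shift_mon m)"
proof -
  have "\<sigma> 1 = 1" using assms by (simp add: difference_field_def)
  then show ?thesis by (simp add: sigmaR_def dmonomial_def)
qed

lemma keys_sigmaR: "Poly_Mapping.keys (sigmaR \<sigma> p) \<subseteq> shift_mon ` Poly_Mapping.keys p"
proof -
  have "Poly_Mapping.keys (sigmaR \<sigma> p) \<subseteq> (\<Union>m\<in>Poly_Mapping.keys p. Poly_Mapping.keys (Poly_Mapping.single (shift_mon m) (\<sigma> (Poly_Mapping.lookup p m))))"
    unfolding sigmaR_def by (rule keys_sum)
  also have "\<dots> \<subseteq> shift_mon ` Poly_Mapping.keys p" by auto
  finally show ?thesis .
qed

definition npow :: "nat \<Rightarrow> ('a \<Rightarrow>\<^sub>0 nat) \<Rightarrow> ('a \<Rightarrow>\<^sub>0 nat)" where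
  "npow K m = (\<Sum>i<K. m)"

lemma lookup_npow: "Poly_Mapping.lookup (npow K m) v = K * Poly_Mapping.lookup m v"
  by (simp add: npow_def lookup_sum)

lemma dmonomial_power: "(dmonomial m :: ('n, 'k::field) dpoly) ^ K = dmonomial (npow K m)"
proof (induction K)
  case 0 then show ?case by (simp add: npow_def dmonomial_def)
next
  case (Suc K)
  have "npow (Suc K) m = m + npow K m" by (simp add: npow_def add.commute)
  then show ?case using Suc by (simp add: dmonomial_mult)
qed

lemma power_split: "\<exists>Q. (x + y :: 'a::comm_ring_1) ^ k = x ^ k + y * Q"
proof (induction k)
  case 0 then show ?case by (intro exI[of _ 0]) simp
next
  case (Suc k)
  then obtain Q where Q: "(x + y) ^ k = x ^ k + y * Q" by blast
  have "(x + y) ^ Suc k = x ^ Suc k + y * (x ^ k + (x + y) * Q)"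
    by (simp add: Q algebra_simps)
  then show ?case by blast
qed

section \<open>Restriction\<close>

definition res :: "('n \<times> nat) set \<Rightarrow> ('n, 'k::field) dpoly \<Rightarrow> ('n, 'k) dpoly" where
  "res T f = Abs_poly_mapping (\<lambda>p. if Poly_Mapping.keys p \<subseteq> T then Poly_Mapping.lookup f p else 0)"

lemma lookup_res: "Poly_Mapping.lookup (res T f) p = (if Poly_Mapping.keys p \<subseteq> T then Poly_Mapping.lookup f p else 0)"
proof -
  have sub: "{p. (if Poly_Mapping.keys p \<subseteq> T then Poly_Mapping.lookup f p else 0) \<noteq> 0} \<subseteq> Poly_Mapping.keys f"
  proof
    fix p assume "p \<in> {p. (if Poly_Mapping.keys p \<subseteq> T then Poly_Mapping.lookup f p else 0) \<noteq> 0}"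
    then have "Poly_Mapping.lookup f p \<noteq> 0" by (cases "Poly_Mapping.keys p \<subseteq> T") simp_all
    then show "p \<in> Poly_Mapping.keys f" by (simp add: lookup_not_eq_zero_eq_in_keys)
  qed
  have fin: "finite {p. (if Poly_Mapping.keys p \<subseteq> T then Poly_Mapping.lookup f p else 0) \<noteq> 0}"
    by (rule finite_subset[OF sub]) simp
  show ?thesis unfolding res_def lookup_Abs_poly_mapping[OF fin] ..
qed

lemma keys_res_W: "Poly_Mapping.keys (res T f) \<subseteq> {p. Poly_Mapping.keys p \<subseteq> T}"
proof
  fix p assume "p \<in> Poly_Mapping.keys (res T f)"
  then have "Poly_Mapping.lookup (res T f) p \<noteq> 0" by (simp add: lookup_not_eq_zero_eq_in_keys)
  then show "p \<in> {p. Poly_Mapping.keys p \<subseteq> T}" by (cases "Poly_Mapping.keys p \<subseteq> T") (simp_all add: lookup_res)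
qed

lemma keys_res_diff: "Poly_Mapping.keys (f - res T f) \<inter> {p. Poly_Mapping.keys p \<subseteq> T} = {}"
proof -
  { fix p assume "p \<in> Poly_Mapping.keys (f - res T f)" "Poly_Mapping.keys p \<subseteq> T"
    then have False by (simp add: lookup_not_eq_zero_eq_in_keys[symmetric] lookup_res lookup_minus) }
  then show ?thesis by blast
qed

lemma keys_mult_out:
  fixes x y :: "('n, 'k::field) dpoly"
  assumes "Poly_Mapping.keys x \<inter> {p. Poly_Mapping.keys p \<subseteq> T} = {}"
  shows "Poly_Mapping.keys (x * y) \<inter> {p. Poly_Mapping.keys p \<subseteq> T} = {}"
proof -
  { fix q assume q: "q \<in> Poly_Mapping.keys (x * y)" "Poly_Mapping.keys q \<subseteq> T"
    then obtain a b where ab: "a \<in> Poly_Mapping.keys x" "b \<in> Poly_Mapping.keys y" "q = a + b"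
      using keys_mult[of x y] by blast
    then have "Poly_Mapping.keys a \<subseteq> T" using q(2) by (simp add: keys_add_nat)
    then have False using assms ab(1) by blast }
  then show ?thesis by blast
qed

lemma keys_mult_in:
  fixes x y :: "('n, 'k::field) dpoly"
  assumes "Poly_Mapping.keys x \<subseteq> {p. Poly_Mapping.keys p \<subseteq> T}"
    "Poly_Mapping.keys y \<subseteq> {p. Poly_Mapping.keys p \<subseteq> T}"
  shows "Poly_Mapping.keys (x * y) \<subseteq> {p. Poly_Mapping.keys p \<subseteq> T}"
proof
  fix q assume q: "q \<in> Poly_Mapping.keys (x * y)"
  then obtain a b where ab: "a \<in> Poly_Mapping.keys x" "b \<in> Poly_Mapping.keys y" "q = a + b"
    using keys_mult[of x y] by blast
  then show "q \<in> {p. Poly_Mapping.keys p \<subseteq> T}" using assms by (auto simp: keys_add_nat)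
qed

lemma keys_power_in:
  fixes x :: "('n, 'k::field) dpoly"
  assumes "Poly_Mapping.keys x \<subseteq> {p. Poly_Mapping.keys p \<subseteq> T}"
  shows "Poly_Mapping.keys (x ^ k) \<subseteq> {p. Poly_Mapping.keys p \<subseteq> T}"
proof (induction k)
  case 0 then show ?case by simp
next
  case (Suc k) then show ?case using keys_mult_in[OF assms Suc] by simp
qed



context
  fixes \<sigma> :: "'k::field \<Rightarrow> 'k" and C :: "('n::finite, 'k) dpoly set"
  assumes df: "difference_field \<sigma>" and sig: "sigma_ideal \<sigma> C"
    and wm: "well_mixed \<sigma> C" and rad: "radical_set C"
begin

lemma C_mul: "a \<in> C \<Longrightarrow> r * a \<in> C"
  using sig unfolding sigma_ideal_def is_ideal_def by blast

lemma M_up: "dmonomial m \<in> C \<Longrightarrow> dmonomial (m + d) \<in> C"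
  using C_mul[of "dmonomial m" "dmonomial d"] by (simp add: dmonomial_mult add.commute)

lemma M_rad:
  assumes "dmonomial p \<in> C" "Poly_Mapping.keys p \<subseteq> Poly_Mapping.keys m"
  shows "dmonomial m \<in> C"
proof -
  define K where "K = Suc (sum (Poly_Mapping.lookup p) (Poly_Mapping.keys p))"
  have le: "Poly_Mapping.lookup p v \<le> K * Poly_Mapping.lookup m v" for v
  proof (cases "v \<in> Poly_Mapping.keys p")
    case True
    then have "v \<in> Poly_Mapping.keys m" using assms(2) by blast
    then have m1: "Poly_Mapping.lookup m v \<ge> 1" by (simp add: lookup_not_eq_zero_eq_in_keys[symmetric] Suc_le_eq)
    have "Poly_Mapping.lookup p v \<le> sum (Poly_Mapping.lookup p) (Poly_Mapping.keys p)"
      by (rule member_le_sum[OF True]) auto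
    then have "Poly_Mapping.lookup p v \<le> K" by (simp add: K_def)
    also have "K \<le> K * Poly_Mapping.lookup m v" using m1 by simp
    finally show ?thesis .
  next
    case False
    then have "Poly_Mapping.lookup p v = 0" by (simp add: not_in_keys_iff_lookup_eq_zero)
    then show ?thesis by simp
  qed
  have eq: "p + (npow K m - p) = npow K m"
    by (rule poly_mapping_eqI) (simp add: lookup_add lookup_minus lookup_npow le)
  have "dmonomial (npow K m) \<in> C" using M_up[OF assms(1), of "npow K m - p"] eq by simp
  then have "dmonomial m ^ K \<in> C" by (simp add: dmonomial_power)
  moreover have "0 < K" by (simp add: K_def)
  ultimately show ?thesis using rad unfolding radical_set_def by blast
qed

lemma M_wm: "dmonomial (m1 + m2) \<in> C \<Longrightarrow> dmonomial (m1 + shift_mon m2) \<in> C"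
  using wm unfolding well_mixed_def
  by (metis dmonomial_mult sigmaR_dmonomial[OF df])

lemma M_sig: "dmonomial m \<in> C \<Longrightarrow> dmonomial (shift_mon m) \<in> C"
  using sig unfolding sigma_ideal_def by (metis sigmaR_dmonomial[OF df])

lemma prodA:
  fixes a b :: "('n, 'k) dpoly"
  assumes "Poly_Mapping.keys (a * b) \<subseteq> {m. dmonomial m \<in> C}"
    "m1 \<in> Poly_Mapping.keys a" "m2 \<in> Poly_Mapping.keys b"
  shows "dmonomial (m1 + m2) \<in> C"
proof (rule ccontr)
  assume nM: "dmonomial (m1 + m2) \<notin> C"
  define T where "T = Poly_Mapping.keys (m1 + m2)"
  let ?W = "{p. Poly_Mapping.keys p \<subseteq> T}"
  define a1 where "a1 = res T a"
  define a2 where "a2 = a - a1"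
  define b1 where "b1 = res T b"
  define b2 where "b2 = b - b1"
  have ab: "a * b = a1 * b1 + (a2 * b + a1 * b2)" by (simp add: a2_def b2_def algebra_simps)
  have Ra: "Poly_Mapping.keys (a2 * b) \<inter> ?W = {}"
    unfolding a2_def a1_def by (rule keys_mult_out[OF keys_res_diff])
  have Rb: "Poly_Mapping.keys (b2 * a1) \<inter> ?W = {}"
    unfolding b2_def b1_def by (rule keys_mult_out[OF keys_res_diff])
  have R: "Poly_Mapping.keys (a2 * b + a1 * b2) \<inter> ?W = {}"
    using keys_add[of "a2 * b" "a1 * b2"] Ra Rb by (auto simp: mult.commute)
  have z: "a1 * b1 = 0"
  proof (rule poly_mapping_eqI)
    fix p
    show "Poly_Mapping.lookup (a1 * b1) p = Poly_Mapping.lookup 0 p"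
    proof (cases "Poly_Mapping.keys p \<subseteq> T")
      case True
      then have "dmonomial p \<notin> C" using M_rad[of p "m1 + m2"] nM T_def by blast
      then have "p \<notin> Poly_Mapping.keys (a * b)" using assms(1) by auto
      then have "Poly_Mapping.lookup (a * b) p = 0" by (simp add: not_in_keys_iff_lookup_eq_zero)
      moreover have "p \<notin> Poly_Mapping.keys (a2 * b + a1 * b2)" using R True by blast
      then have "Poly_Mapping.lookup (a2 * b + a1 * b2) p = 0" by (simp add: not_in_keys_iff_lookup_eq_zero)
      ultimately show ?thesis using ab by (simp add: lookup_add)
    next
      case False
      then have "p \<notin> Poly_Mapping.keys (a1 * b1)"
        using keys_mult_in[OF keys_res_W[of T a] keys_res_W[of T b]] a1_def b1_def by blast
      then show ?thesis by (simp add: not_in_keys_iff_lookup_eq_zero)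
    qed
  qed
  have "Poly_Mapping.keys m1 \<subseteq> T" "Poly_Mapping.keys m2 \<subseteq> T" by (auto simp: T_def keys_add_nat)
  then have "Poly_Mapping.lookup a1 m1 \<noteq> 0" "Poly_Mapping.lookup b1 m2 \<noteq> 0"
    using assms(2,3) by (simp_all add: a1_def b1_def lookup_res lookup_not_eq_zero_eq_in_keys)
  then have "a1 \<noteq> 0" "b1 \<noteq> 0" by auto
  then show False using z dpoly_no_zd by blast
qed

lemma powB:
  fixes f :: "('n, 'k) dpoly"
  assumes "Poly_Mapping.keys (f ^ k) \<subseteq> {m. dmonomial m \<in> C}" "m \<in> Poly_Mapping.keys f"
  shows "dmonomial m \<in> C"
proof (rule ccontr)
  assume nM: "dmonomial m \<notin> C"
  define T where "T = Poly_Mapping.keys m"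
  let ?W = "{p. Poly_Mapping.keys p \<subseteq> T}"
  define f1 where "f1 = res T f"
  define f2 where "f2 = f - f1"
  obtain Q where Q: "(f1 + f2) ^ k = f1 ^ k + f2 * Q" using power_split by blast
  have ff: "f = f1 + f2" by (simp add: f2_def)
  have R: "Poly_Mapping.keys (f2 * Q) \<inter> ?W = {}"
    unfolding f2_def f1_def by (rule keys_mult_out[OF keys_res_diff])
  have z: "f1 ^ k = 0"
  proof (rule poly_mapping_eqI)
    fix p
    show "Poly_Mapping.lookup (f1 ^ k) p = Poly_Mapping.lookup 0 p"
    proof (cases "Poly_Mapping.keys p \<subseteq> T")
      case True
      then have "dmonomial p \<notin> C" using M_rad[of p m] nM T_def by blast
      then have "p \<notin> Poly_Mapping.keys (f ^ k)" using assms(1) by auto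
      then have "Poly_Mapping.lookup (f ^ k) p = 0" by (simp add: not_in_keys_iff_lookup_eq_zero)
      moreover have "p \<notin> Poly_Mapping.keys (f2 * Q)" using R True by blast
      then have "Poly_Mapping.lookup (f2 * Q) p = 0" by (simp add: not_in_keys_iff_lookup_eq_zero)
      ultimately show ?thesis using Q ff by (simp add: lookup_add)
    next
      case False
      then have "p \<notin> Poly_Mapping.keys (f1 ^ k)"
        using keys_power_in[OF keys_res_W, of T f k] f1_def by blast
      then show ?thesis by (simp add: not_in_keys_iff_lookup_eq_zero)
    qed
  qed
  have "Poly_Mapping.lookup f1 m \<noteq> 0"
    using assms(2) by (simp add: f1_def T_def lookup_res lookup_not_eq_zero_eq_in_keys)
  then have "f1 \<noteq> 0" by auto
  then show False using z dpoly_pow_zero by blast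
qed

definition JJ :: "('n, 'k) dpoly set" where
  "JJ = {f. Poly_Mapping.keys f \<subseteq> {m. dmonomial m \<in> C}}"

lemma JJ_ideal: "is_ideal JJ"
  unfolding is_ideal_def
proof (intro conjI ballI allI impI)
  show "0 \<in> JJ" by (simp add: JJ_def)
next
  fix a b assume "a \<in> JJ" "b \<in> JJ"
  then show "a + b \<in> JJ" using keys_add[of a b] by (auto simp: JJ_def)
next
  fix r a assume a: "a \<in> JJ"
  show "r * a \<in> JJ" unfolding JJ_def mem_Collect_eq
  proof
    fix q assume "q \<in> Poly_Mapping.keys (r * a)"
    then obtain x y where "x \<in> Poly_Mapping.keys r" "y \<in> Poly_Mapping.keys a" "q = x + y"
      using keys_mult[of r a] by blast
    then show "q \<in> {m. dmonomial m \<in> C}" using a M_up[of y x] by (auto simp: JJ_def add.commute)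
  qed
qed

lemma JJ_sig: "sigma_ideal \<sigma> JJ"
  unfolding sigma_ideal_def
proof (intro conjI ballI JJ_ideal)
  fix a assume a: "a \<in> JJ"
  show "sigmaR \<sigma> a \<in> JJ" using keys_sigmaR[of \<sigma> a] a M_sig by (auto simp: JJ_def)
qed

lemma JJ_wm: "well_mixed \<sigma> JJ"
  unfolding well_mixed_def
proof (intro allI impI)
  fix a b assume ab: "a * b \<in> JJ"
  show "a * sigmaR \<sigma> b \<in> JJ" unfolding JJ_def mem_Collect_eq
  proof
    fix q assume "q \<in> Poly_Mapping.keys (a * sigmaR \<sigma> b)"
    then obtain x y where xy: "x \<in> Poly_Mapping.keys a" "y \<in> Poly_Mapping.keys (sigmaR \<sigma> b)" "q = x + y"
      using keys_mult[of a "sigmaR \<sigma> b"] by blast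
    then obtain z where z: "z \<in> Poly_Mapping.keys b" "y = shift_mon z" using keys_sigmaR[of \<sigma> b] by blast
    have "dmonomial (x + z) \<in> C" using prodA[of a b x z] ab xy(1) z(1) by (simp add: JJ_def)
    then show "q \<in> {m. dmonomial m \<in> C}" using M_wm xy(3) z(2) by simp
  qed
qed

lemma JJ_rad: "radical_set JJ"
  unfolding radical_set_def
proof (intro allI impI)
  fix f :: "('n, 'k) dpoly" and k :: nat assume "0 < k" "f ^ k \<in> JJ"
  then show "f \<in> JJ" using powB[of f k] by (auto simp: JJ_def)
qed

end




lemma ideal_sum:
  assumes "is_ideal K" "finite A" "\<forall>x\<in>A. g x \<in> K"
  shows "sum g A \<in> K"
  using assms(2,3)
proof (induction A rule: finite_induct)
  case empty then show ?case using assms(1) by (simp add: is_ideal_def)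
next
  case (insert x A) then show ?case using assms(1) by (simp add: is_ideal_def)
qed

lemma expand:
  fixes f :: "('n, 'k::field) dpoly"
  shows "f = (\<Sum>m\<in>Poly_Mapping.keys f. Poly_Mapping.single 0 (Poly_Mapping.lookup f m) * dmonomial m)"
proof (rule poly_mapping_eqI)
  fix p
  have "Poly_Mapping.lookup (\<Sum>m\<in>Poly_Mapping.keys f. Poly_Mapping.single 0 (Poly_Mapping.lookup f m) * dmonomial m) p
      = (\<Sum>m\<in>Poly_Mapping.keys f. if m = p then Poly_Mapping.lookup f m else 0)"
    by (simp add: lookup_sum dmonomial_def mult_single lookup_single when_def)
  also have "\<dots> = Poly_Mapping.lookup f p" by (simp add: not_in_keys_iff_lookup_eq_zero)
  finally show "Poly_Mapping.lookup f p = Poly_Mapping.lookup (\<Sum>m\<in>Poly_Mapping.keys f. Poly_Mapping.single 0 (Poly_Mapping.lookup f m) * dmonomial m) p" by simp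
qed

theorem corollary5p5:
  fixes \<sigma> :: "'k::field_char_0 \<Rightarrow> 'k"
    and I :: "('n::finite, 'k) dpoly set"
  assumes "difference_field \<sigma>"
    and "sigma_ideal \<sigma> I" and "monomial_ideal I"
  shows "sigma_ideal \<sigma> (rwm_closure \<sigma> I) \<and> monomial_ideal (rwm_closure \<sigma> I)"
proof -
  define C where "C = rwm_closure \<sigma> I"
  have P: "sigma_ideal \<sigma> C" "well_mixed \<sigma> C" "radical_set C" "I \<subseteq> C"
    using closure_props[of \<sigma> I] by (simp_all add: C_def)
  have Cid: "is_ideal C" using P(1) by (simp add: sigma_ideal_def)
  obtain S where S: "S \<subseteq> range dmonomial" "I = ideal_gen S"
    using assms(3) unfolding monomial_ideal_def by blast
  note JI = JJ_ideal[OF assms(1) P(1-3)]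
  note JS = JJ_sig[OF assms(1) P(1-3)]
  note JW = JJ_wm[OF assms(1) P(1-3)]
  note JR = JJ_rad[OF assms(1) P(1-3)]
  have SJ: "S \<subseteq> JJ C"
  proof
    fix s assume s: "s \<in> S"
    then obtain u where u: "s = dmonomial u" using S(1) by auto
    have "s \<in> ideal_gen S" using s by (auto simp: ideal_gen_def)
    then have "s \<in> C" using S(2) P(4) by auto
    then show "s \<in> JJ C" using u by (simp add: JJ_def[OF assms(1) P(1-3)] dmonomial_def)
  qed
  have "I \<subseteq> JJ C" using S(2) SJ JI by (auto simp: ideal_gen_def)
  then have CJ: "C \<subseteq> JJ C" unfolding C_def using closure_least[OF JS JW JR] C_def by simp
  define S' where "S' = (dmonomial :: 'n dmon \<Rightarrow> ('n, 'k) dpoly) ` {m. dmonomial m \<in> C}"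
  have "C = ideal_gen S'"
  proof
    show "C \<subseteq> ideal_gen S'"
    proof
      fix f assume "f \<in> C"
      then have fk: "Poly_Mapping.keys f \<subseteq> {m. dmonomial m \<in> C}" using CJ by (auto simp: JJ_def[OF assms(1) P(1-3)])
      show "f \<in> ideal_gen S'" unfolding ideal_gen_def
      proof
        fix K assume K: "K \<in> {J. is_ideal J \<and> S' \<subseteq> J}"
        have "(\<Sum>m\<in>Poly_Mapping.keys f. Poly_Mapping.single 0 (Poly_Mapping.lookup f m) * dmonomial m) \<in> K"
        proof (rule ideal_sum)
          show "is_ideal K" using K by simp
        next
          show "finite (Poly_Mapping.keys f)" by simp
        next
          show "\<forall>x\<in>Poly_Mapping.keys f. Poly_Mapping.single 0 (Poly_Mapping.lookup f x) * dmonomial x \<in> K"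
          proof
            fix x assume "x \<in> Poly_Mapping.keys f"
            then have "dmonomial x \<in> K" using fk K by (auto simp: S'_def)
            then show "Poly_Mapping.single 0 (Poly_Mapping.lookup f x) * dmonomial x \<in> K"
              using K by (simp add: is_ideal_def)
          qed
        qed
        then show "f \<in> K" using expand[of f] by simp
      qed
    qed
  next
    have "S' \<subseteq> C" by (auto simp: S'_def)
    then show "ideal_gen S' \<subseteq> C" using Cid by (auto simp: ideal_gen_def)
  qed
  moreover have "S' \<subseteq> range dmonomial" by (auto simp: S'_def)
  ultimately have "monomial_ideal C" unfolding monomial_ideal_def by blast
  then show ?thesis using P(1) by (simp add: C_def)
qed


end
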